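(* Let $d\ge1$, $1<r<\infty$, $k\in\mathbb{Z}$, $C_1>0$, and $\alpha>\frac{d-1}{r'}$ where $r'=r/(r-1)$. Let $\mathcal{Q}$ be a finite collection of pairwise disjoint cubes $Q\subset\mathbb{R}^d$ with side length $\ell(Q)\le C_1 2^k$, and for each $Q\in\mathcal{Q}$ let $b^Q$ be an integrable scalar-valued function supported on $Q$ with $\int b^Q=0$. Then for every $x\in\mathbb{R}^d$, $$R_k\Big(\sum_{Q\in\mathcal{Q}}b^Q\Big)(x)^r\le C\,(2^k)^{\alpha r}\sum_{Q\in\mathcal{Q}}\ell(Q)^{-\alpha r}R_k(b^Q)(x)^r,$$ where $C$ depends only on $\alpha,r,d,C_1$.
   Context: $A_tb(x)=\frac{1}{|B(0,t)|}\int_{B(0,t)}b(x+y)\,dy$. For $(a_t)_{t\in I}$, $\hat V^r(a_t)_{t\in I}=\sup_{t_0<\dots<t_J\in I}(\sum_{j=1}^J|a_{t_j}-a_{t_{j-1}}|^r)^{1/r}$ and $V^r(a_t)_{t\in I}=\sup_{t\in I}|a_t|+\hat V^r(a_t)_{t\in I}$. Define $R_kb(x)=V^r(A_tb(x))_{t\in[2^k,2^{k+1}]}$. *)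

theory Defs
  imports "HOL-Analysis.Analysis"
begin

definition epowr :: "ennreal \<Rightarrow> real \<Rightarrow> ennreal" where
  "epowr x p = (if x = \<infinity> then \<infinity> else ennreal (enn2real x powr p))"

definition avg :: "real \<Rightarrow> ('a::euclidean_space \<Rightarrow> complex) \<Rightarrow> 'a \<Rightarrow> complex" where
  "avg t b x = (1 / measure lebesgue (ball (0::'a) t)) *\<^sub>R
      (LINT y : ball (0::'a) t | lebesgue. b (x + y))"

definition hatV :: "real \<Rightarrow> (real \<Rightarrow> complex) \<Rightarrow> real set \<Rightarrow> ennreal" where
  "hatV r a I = (SUP (J, t) \<in> {(J::nat, t::nat \<Rightarrow> real).
        (\<forall>j<J. t j < t (Suc j)) \<and> (\<forall>j\<le>J. t j \<in> I)}.
      ennreal ((\<Sum>j=1..J. norm (a (t j) - a (t (j - 1))) powr r) powr (1 / r)))"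

definition Vr :: "real \<Rightarrow> (real \<Rightarrow> complex) \<Rightarrow> real set \<Rightarrow> ennreal" where
  "Vr r a I = (SUP t\<in>I. ennreal (norm (a t))) + hatV r a I"

definition Rk :: "real \<Rightarrow> int \<Rightarrow> ('a::euclidean_space \<Rightarrow> complex) \<Rightarrow> 'a \<Rightarrow> ennreal" where
  "Rk r k b x = Vr r (\<lambda>t. avg t b x) {2 powr real_of_int k .. 2 powr real_of_int (k + 1)}"

text \<open>Q is a cube of side length l: it lies between the open and the closed axis-parallel box
  with lower corner a and side l (so open, closed and half-open cubes are all allowed).\<close>
definition is_cube :: "'a::euclidean_space set \<Rightarrow> real \<Rightarrow> bool" where
  "is_cube Q l \<longleftrightarrow> l > 0 \<and> (\<exists>a. box a (a + l *\<^sub>R One) \<subseteq> Q \<and> Q \<subseteq> cbox a (a + l *\<^sub>R One))"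

end

theory Submission
  imports Defs
begin


lemma lebesgue_translate:
  "distr lebesgue lebesgue (\<lambda>y. x + y) = (lebesgue :: 'a::euclidean_space measure)"
proof -
  have T: "(\<lambda>y. x + (\<Sum>j\<in>(Basis::'a set). (1 * (y \<bullet> j)) *\<^sub>R j)) = (\<lambda>y. x + y)"
    by (simp add: euclidean_representation)
  have "lebesgue = density (distr lebesgue lebesgue (\<lambda>y. x + (\<Sum>j\<in>(Basis::'a set). (1 * (y \<bullet> j)) *\<^sub>R j))) (\<lambda>_. (\<Prod>j\<in>(Basis::'a set). \<bar>1::real\<bar>))"
    by (rule lebesgue_affine_euclidean) simp
  then show ?thesis unfolding T by (simp add: density_1)
qed

lemma translate_meas: "(\<lambda>y. x + y) \<in> (lebesgue :: 'a::euclidean_space measure) \<rightarrow>\<^sub>M lebesgue"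
proof -
  have T: "(\<lambda>y. x + (\<Sum>j\<in>(Basis::'a set). (1 * (y \<bullet> j)) *\<^sub>R j)) = (\<lambda>y. x + y)"
    by (simp add: euclidean_representation)
  show ?thesis using lebesgue_affine_measurable[of "\<lambda>_. 1::real" x] unfolding T by simp
qed

lemma integrable_translate:
  fixes b :: "'a::euclidean_space \<Rightarrow> complex"
  assumes "integrable lebesgue b"
  shows "integrable lebesgue (\<lambda>y. b (x + y))"
proof -
  have "integrable (distr lebesgue lebesgue (\<lambda>y. x + y)) b" using assms by (simp add: lebesgue_translate)
  then show ?thesis using integrable_distr_eq[OF translate_meas, of b] by auto
qed

lemma integral_translate:
  fixes b :: "'a::euclidean_space \<Rightarrow> complex"
  assumes "integrable lebesgue b"
  shows "(LINT y | lebesgue. b (x + y)) = (LINT y | lebesgue. b y)"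
proof -
  have "(LINT y | lebesgue. b (x + y)) = (LINT y | distr lebesgue lebesgue (\<lambda>y. x + y). b y)"
    by (rule integral_distr[symmetric, OF translate_meas]) (use assms in auto)
  then show ?thesis by (simp add: lebesgue_translate)
qed

lemma avg_zero:
  fixes b :: "'a::euclidean_space \<Rightarrow> complex"
  assumes "integrable lebesgue b" "\<And>y. y \<notin> Q \<Longrightarrow> b y = 0" "(LINT y | lebesgue. b y) = 0"
    "Q \<subseteq> S" "connected S" "S \<inter> sphere x t = {}" "t > 0"
  shows "avg t b x = 0"
proof (cases "S \<inter> ball x t = {}")
  case True
  have "\<And>y. indicator (ball 0 t) y *\<^sub>R b (x + y) = 0"
  proof -
    fix y
    show "indicator (ball 0 t) y *\<^sub>R b (x + y) = 0"
    proof (cases "y \<in> ball 0 t")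
      case True
      then have "x + y \<in> ball x t" by (simp add: dist_norm)
      then have "x + y \<notin> Q" using \<open>S \<inter> ball x t = {}\<close> assms(4) by blast
      then show ?thesis using assms(2) by simp
    qed simp
  qed
  then have "(\<lambda>y. indicator (ball 0 t) y *\<^sub>R b (x + y)) = (\<lambda>_. 0)" by (rule ext)
  then show ?thesis unfolding avg_def set_lebesgue_integral_def by simp
next
  case False
  have "S - ball x t = {}"
  proof (rule ccontr)
    assume "S - ball x t \<noteq> {}"
    then have "S \<inter> frontier (ball x t) \<noteq> {}"
      using connected_Int_frontier[OF assms(5) False] by blast
    then show False using assms(6,7) by simp
  qed
  then have "\<And>y. indicator (ball 0 t) y *\<^sub>R b (x + y) = b (x + y)"
  proof -
    fix y
    show "indicator (ball 0 t) y *\<^sub>R b (x + y) = b (x + y)"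
    proof (cases "y \<in> ball 0 t")
      case False
      then have "x + y \<notin> ball x t" by (simp add: dist_norm)
      then have "x + y \<notin> Q" using \<open>S - ball x t = {}\<close> assms(4) by blast
      then show ?thesis using assms(2) by simp
    qed simp
  qed
  then show ?thesis unfolding avg_def set_lebesgue_integral_def
    using integral_translate[OF assms(1), of x] assms(3) by simp
qed



lemma holder_sum:
  fixes c w :: "'i \<Rightarrow> real"
  assumes J: "finite J" and w: "\<And>i. i \<in> J \<Longrightarrow> w i > 0" and c: "\<And>i. i \<in> J \<Longrightarrow> c i \<ge> 0"
    and r: "r > 1"
  shows "(\<Sum>i\<in>J. c i) powr r \<le> (\<Sum>i\<in>J. w i powr (r/(r-1))) powr (r-1) * (\<Sum>i\<in>J. w i powr (-r) * c i powr r)"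
proof -
  define q where "q = r/(r-1)"
  have q: "q > 0" using r by (simp add: q_def)
  have qr1: "q * (r - 1) = r" using r by (simp add: q_def)
  have qr: "q - q * r = - r" using qr1 by (simp add: algebra_simps)
  define J' where "J' = {i\<in>J. c i \<noteq> 0}"
  have J'J: "J' \<subseteq> J" and fJ': "finite J'" using J by (auto simp: J'_def)
  have sumJ': "(\<Sum>i\<in>J. c i) = (\<Sum>i\<in>J'. c i)"
    unfolding J'_def by (rule sum.mono_neutral_right[OF J]) auto
  have RHS_nn: "0 \<le> (\<Sum>i\<in>J. w i powr q) powr (r-1) * (\<Sum>i\<in>J. w i powr (-r) * c i powr r)"
    by (intro mult_nonneg_nonneg sum_nonneg) auto
  show ?thesis
  proof (cases "J' = {}")
    case True
    then show ?thesis using RHS_nn sumJ' by (simp add: q_def)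
  next
    case False
    define W' where "W' = (\<Sum>i\<in>J'. w i powr q)"
    have W'pos: "W' > 0" unfolding W'_def
      using False fJ' J'J w by (intro sum_pos) (auto, force)
    define p where "p i = w i powr q / W'" for i
    define y where "y i = W' * c i / w i powr q" for i
    have cpos: "\<And>i. i \<in> J' \<Longrightarrow> c i > 0" using c unfolding J'_def by force
    have wJ': "\<And>i. i \<in> J' \<Longrightarrow> w i > 0" using w J'J by blast
    have "(\<Sum>i\<in>J'. p i *\<^sub>R y i) powr r \<le> (\<Sum>i\<in>J'. p i * y i powr r)"
    proof (rule convex_on_sum[OF fJ' False powr_convex])
      show "1 \<le> r" using r by simp
      show "(\<Sum>i\<in>J'. p i) = 1" unfolding p_def W'_def using W'pos W'_def
        by (simp add: sum_divide_distrib[symmetric])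
      show "\<And>i. i \<in> J' \<Longrightarrow> 0 \<le> p i" unfolding p_def using W'pos by simp
      show "\<And>i. i \<in> J' \<Longrightarrow> y i \<in> {0<..}" unfolding y_def using W'pos cpos wJ' by (auto intro!: divide_pos_pos) force
    qed
    moreover have "(\<Sum>i\<in>J'. p i *\<^sub>R y i) = (\<Sum>i\<in>J'. c i)"
    proof (rule sum.cong)
      fix i assume "i \<in> J'"
      then have "w i > 0" by (rule wJ')
      then show "p i *\<^sub>R y i = c i" using W'pos by (simp add: p_def y_def)
    qed simp
    moreover have "p i * y i powr r = W' powr (r - 1) * (w i powr (-r) * c i powr r)" if "i \<in> J'" for i
    proof -
      have "y i powr r = W' powr r * c i powr r / w i powr (q * r)"
        unfolding y_def using W'pos cpos[OF that] wJ'[OF that]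
        by (simp add: powr_divide powr_mult powr_powr)
      then have "p i * y i powr r = W' powr r / W' * c i powr r * (w i powr q / w i powr (q * r))"
        unfolding p_def by simp
      also have "w i powr q / w i powr (q * r) = w i powr (-r)"
        using wJ'[OF that] qr by (simp add: powr_diff[symmetric])
      also have "W' powr r / W' = W' powr (r - 1)"
        using W'pos by (simp add: powr_diff)
      finally show ?thesis by simp
    qed
    then have "(\<Sum>i\<in>J'. p i * y i powr r) = W' powr (r - 1) * (\<Sum>i\<in>J'. w i powr (-r) * c i powr r)"
      by (simp add: sum_distrib_left)
    moreover have "W' powr (r - 1) \<le> (\<Sum>i\<in>J. w i powr q) powr (r-1)"
    proof -
      have "W' \<le> (\<Sum>i\<in>J. w i powr q)" unfolding W'_def
        by (rule sum_mono2[OF J J'J]) auto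
      then show ?thesis using W'pos r by (intro powr_mono2) auto
    qed
    moreover have "(\<Sum>i\<in>J'. w i powr (-r) * c i powr r) \<le> (\<Sum>i\<in>J. w i powr (-r) * c i powr r)"
      by (rule sum_mono2[OF J J'J]) auto
    ultimately have "(\<Sum>i\<in>J'. c i) powr r \<le> (\<Sum>i\<in>J. w i powr q) powr (r-1) * (\<Sum>i\<in>J. w i powr (-r) * c i powr r)"
      by (smt (verit, best) W'pos mult_mono powr_ge_zero sum_nonneg mult_nonneg_nonneg)
    then show ?thesis using sumJ' by (simp add: q_def)
  qed
qed



lemma pow_diff_le:
  fixes a b :: real
  assumes "0 \<le> a" "a \<le> b"
  shows "b ^ n - a ^ n \<le> real n * (b - a) * b ^ (n - 1)"
proof (induction n)
  case 0 then show ?case by simp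
next
  case (Suc n)
  have "b ^ Suc n - a ^ Suc n = b * (b ^ n - a ^ n) + (b - a) * a ^ n" by (simp add: algebra_simps)
  also have "\<dots> \<le> b * (real n * (b - a) * b ^ (n - 1)) + (b - a) * b ^ n"
    using Suc assms by (intro add_mono mult_left_mono mult_right_mono power_mono) auto
  also have "\<dots> = real (Suc n) * (b - a) * b ^ (Suc n - 1)"
    by (cases n) (simp_all add: algebra_simps)
  finally show ?case .
qed

lemma shell_measure:
  fixes x :: "'a::euclidean_space"
  assumes "t \<ge> 0" "w \<ge> 0"
  shows "measure lborel (cball x (t + w) - ball x (t - w))
     \<le> 2 * real DIM('a) * w * unit_ball_vol (DIM('a)) * (t + w) ^ (DIM('a) - 1)"
proof -
  let ?d = "DIM('a)" and ?v = "unit_ball_vol (DIM('a))"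
  have v: "?v > 0" by simp
  have d1: "?d \<ge> 1" by (simp add: DIM_positive Suc_leI)
  have cb: "measure lborel (cball x (t + w)) = ?v * (t + w) ^ ?d"
    using content_cball[of "t + w" x] assms by simp
  show ?thesis
  proof (cases "t - w \<ge> 0")
    case True
    have b: "measure lborel (ball x (t - w)) = ?v * (t - w) ^ ?d"
      using content_ball[of "t - w" x] True by simp
    have "measure lborel (cball x (t + w) - ball x (t - w))
        = measure lborel (cball x (t + w)) - measure lborel (ball x (t - w))"
      by (rule measure_Diff) (use assms in \<open>auto simp: emeasure_cball\<close>)
    also have "\<dots> = ?v * ((t + w) ^ ?d - (t - w) ^ ?d)" using cb b by (simp add: algebra_simps)
    also have "\<dots> \<le> ?v * (real ?d * ((t + w) - (t - w)) * (t + w) ^ (?d - 1))"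
      using True assms v by (intro mult_left_mono pow_diff_le) auto
    finally show ?thesis by (simp add: algebra_simps)
  next
    case False
    have "measure lborel (cball x (t + w) - ball x (t - w)) \<le> measure lborel (cball x (t + w))"
      by (rule measure_mono_fmeasurable) (use emeasure_cball[of "t+w" x] assms in \<open>auto simp: fmeasurable_def\<close>)
    also have "\<dots> = ?v * ((t + w) * (t + w) ^ (?d - 1))"
      using cb d1 by (metis One_nat_def Suc_diff_le diff_Suc_Suc minus_nat.diff_0 power_Suc)
    also have "\<dots> \<le> ?v * ((2 * real ?d * w) * (t + w) ^ (?d - 1))"
    proof -
      have "t + w \<le> 2 * w" using False by simp
      also have "\<dots> \<le> 2 * real ?d * w"
      proof -
        have "1 * w \<le> real ?d * w" using d1 assms by (intro mult_right_mono) auto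
        then show ?thesis by simp
      qed
      finally show ?thesis using v assms by (intro mult_left_mono mult_right_mono) auto
    qed
    finally show ?thesis by (simp add: algebra_simps)
  qed
qed

lemma cube_diam:
  fixes a y z :: "'a::euclidean_space"
  assumes "y \<in> cbox a (a + l *\<^sub>R One)" "z \<in> cbox a (a + l *\<^sub>R One)"
  shows "dist y z \<le> real DIM('a) * l"
proof -
  have "dist y z = norm (y - z)" by (simp add: dist_norm)
  also have "\<dots> \<le> (\<Sum>b\<in>Basis. \<bar>(y - z) \<bullet> b\<bar>)" by (rule norm_le_l1)
  also have "\<dots> \<le> (\<Sum>b\<in>(Basis::'a set). l)"
  proof (rule sum_mono)
    fix b :: 'a assume b: "b \<in> Basis"
    have "a \<bullet> b \<le> y \<bullet> b" "y \<bullet> b \<le> a \<bullet> b + l" "a \<bullet> b \<le> z \<bullet> b" "z \<bullet> b \<le> a \<bullet> b + l"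
      using assms b by (auto simp: mem_box inner_add_left)
    then show "\<bar>(y - z) \<bullet> b\<bar> \<le> l" by (simp add: inner_diff_left abs_le_iff)
  qed
  finally show ?thesis by simp
qed

lemma cube_in_shell:
  fixes a x :: "'a::euclidean_space"
  assumes "cbox a (a + l *\<^sub>R One) \<inter> sphere x t \<noteq> {}" "real DIM('a) * l \<le> w"
  shows "cbox a (a + l *\<^sub>R One) \<subseteq> cball x (t + w) - ball x (t - w)"
proof
  fix y assume y: "y \<in> cbox a (a + l *\<^sub>R One)"
  from assms(1) obtain z where z0: "z \<in> cbox a (a + l *\<^sub>R One)" "z \<in> sphere x t" by blast
  then have z: "z \<in> cbox a (a + l *\<^sub>R One)" "dist x z = t" by auto
  have "dist y z \<le> w" using cube_diam[OF y z(1)] assms(2) by simp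
  then have "dist x y \<le> t + w" "dist x y \<ge> t - w" using z(2) dist_triangle[of x y z] dist_triangle[of x z y]
    by (auto simp: dist_commute)
  then show "y \<in> cball x (t + w) - ball x (t - w)" by auto
qed



lemma dyadic_group:
  assumes "0 < l" "l \<le> s"
  shows "s / 2 ^ (Suc (nat \<lfloor>log 2 (s / l)\<rfloor>)) < l \<and> l \<le> s / 2 ^ (nat \<lfloor>log 2 (s / l)\<rfloor>)"
proof -
  define y where "y = log 2 (s / l)"
  have sl: "s / l \<ge> 1" using assms by simp
  then have y0: "y \<ge> 0" unfolding y_def by simp
  define m where "m = nat \<lfloor>y\<rfloor>"
  have m: "real m \<le> y" "y < real m + 1" using y0 unfolding m_def by linarith+
  have "2 ^ m = (2::real) powr real m" by (simp add: powr_realpow)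
  also have "\<dots> \<le> 2 powr y" using m by simp
  also have "\<dots> = s / l" unfolding y_def using sl by simp
  finally have 1: "2 ^ m \<le> s / l" .
  have "s / l = 2 powr y" unfolding y_def using sl by simp
  also have "\<dots> < 2 powr (real m + 1)" using m by simp
  also have "\<dots> = 2 ^ Suc m" by (simp add: powr_add powr_realpow)
  finally have 2: "s / l < 2 ^ Suc m" .
  from 1 2 assms show ?thesis unfolding m_def[symmetric] y_def[symmetric]
    by (auto simp: field_simps)
qed

lemma count_cubes:
  fixes x :: "'a::euclidean_space" and a :: "nat \<Rightarrow> 'a" and l :: "nat \<Rightarrow> real"
  assumes I: "finite I" and lpos: "\<And>i. i \<in> I \<Longrightarrow> 0 < l i \<and> l i \<le> s"
    and disj: "\<And>i j. i \<in> I \<Longrightarrow> j \<in> I \<Longrightarrow> i \<noteq> j \<Longrightarrow>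
        box (a i) (a i + l i *\<^sub>R One) \<inter> box (a j) (a j + l j *\<^sub>R One) = {}"
    and \<beta>: "\<beta> > real DIM('a) - 1" and t: "t \<ge> 0" and s: "s > 0"
  shows "(\<Sum>i\<in>{i\<in>I. cbox (a i) (a i + l i *\<^sub>R One) \<inter> sphere x t \<noteq> {}}. l i powr \<beta>)
     \<le> 2 ^ DIM('a) * (2 * real DIM('a) * real DIM('a) * unit_ball_vol (DIM('a)))
        * (t + real DIM('a) * s) ^ (DIM('a) - 1) * s powr (\<beta> - real DIM('a) + 1)
        / (1 - 1 / 2 powr (\<beta> - real DIM('a) + 1))"
proof -
  let ?d = "DIM('a)" and ?v = "unit_ball_vol (DIM('a))"
  define D where "D = real ?d"
  define \<gamma> where "\<gamma> = \<beta> - D + 1"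
  have \<gamma>: "\<gamma> > 0" using \<beta> unfolding \<gamma>_def D_def by simp
  define q where "q = 1 / 2 powr \<gamma>"
  have q: "0 < q" "q < 1" using \<gamma> unfolding q_def by auto
  define K1 where "K1 = 2 ^ ?d * (2 * D * D * ?v) * (t + D * s) ^ (?d - 1) * s powr \<gamma>"
  have K1: "K1 \<ge> 0" unfolding K1_def D_def using t s by simp
  define M where "M = {i\<in>I. cbox (a i) (a i + l i *\<^sub>R One) \<inter> sphere x t \<noteq> {}}"
  have fM: "finite M" using I by (simp add: M_def)
  define g where "g i = nat \<lfloor>log 2 (s / l i)\<rfloor>" for i
  have grp: "s / 2 ^ Suc (g i) < l i \<and> l i \<le> s / 2 ^ g i" if "i \<in> I" for i
    unfolding g_def using dyadic_group lpos[OF that] by blast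
  have D1: "D \<ge> 1" unfolding D_def by (simp add: DIM_positive Suc_leI)
  have b0: "\<beta> \<ge> 0" using \<beta> D1 unfolding D_def by linarith
  have per_m: "(\<Sum>i\<in>{i. i \<in> M \<and> g i = m}. l i powr \<beta>) \<le> K1 * q ^ m" for m
  proof -
    define G where "G = {i. i \<in> M \<and> g i = m}"
    define \<sigma> where "\<sigma> = s / 2 ^ m"
    have \<sigma>: "\<sigma> > 0" "\<sigma> \<le> s" using s unfolding \<sigma>_def by (auto simp: field_simps)
    define w where "w = D * \<sigma>"
    have GI: "G \<subseteq> I" unfolding G_def M_def by auto
    have fG: "finite G" using GI I finite_subset by blast
    have lG: "\<sigma> / 2 < l i \<and> l i \<le> \<sigma>" if "i \<in> G" for i
      using grp[of i] that GI unfolding G_def \<sigma>_def by auto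
    have step1: "l i powr \<beta> \<le> 2 ^ ?d * \<sigma> powr (\<beta> - D) * l i ^ ?d" if "i \<in> G" for i
    proof -
      have li: "l i > 0" using lG[OF that] \<sigma> by linarith
      have "l i powr \<beta> = l i powr (\<beta> - D) * l i ^ ?d"
        using li by (simp add: D_def powr_realpow[symmetric] powr_add[symmetric])
      also have "l i powr (\<beta> - D) \<le> 2 ^ ?d * \<sigma> powr (\<beta> - D)"
      proof (cases "\<beta> - D \<ge> 0")
        case True
        then have "l i powr (\<beta> - D) \<le> \<sigma> powr (\<beta> - D)" using lG[OF that] li by (intro powr_mono2) auto
        also have "\<dots> \<le> 2 ^ ?d * \<sigma> powr (\<beta> - D)" by (simp add: mult_le_cancel_right1)
        finally show ?thesis .
      next
        case False
        have "l i powr (\<beta> - D) \<le> (\<sigma> / 2) powr (\<beta> - D)"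
          using lG[OF that] li \<sigma> False by (intro powr_mono2') auto
        also have "\<dots> = 2 powr (D - \<beta>) * \<sigma> powr (\<beta> - D)"
          using \<sigma> by (simp add: powr_divide powr_minus_divide[symmetric] divide_powr_uminus)
        also have "2 powr (D - \<beta>) \<le> 2 powr D" using b0 by (intro powr_mono) auto
        also have "2 powr D = 2 ^ ?d" by (simp add: D_def powr_realpow)
        finally show ?thesis using \<sigma> by (simp add: mult_right_mono)
      qed
      finally show ?thesis using li by (simp add: mult_right_mono)
    qed
    have boxm: "measure lborel (box (a i) (a i + l i *\<^sub>R One)) = l i ^ ?d" if "i \<in> I" for i
      using lpos[OF that] by (simp add: measure_lborel_box_eq inner_add_left)
    have step2: "(\<Sum>i\<in>G. l i ^ ?d) \<le> measure lborel (cball x (t + w) - ball x (t - w))"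
    proof -
      have "(\<Sum>i\<in>G. l i ^ ?d) = (\<Sum>i\<in>G. measure lborel (box (a i) (a i + l i *\<^sub>R One)))"
        using boxm GI by (intro sum.cong) auto
      also have "\<dots> = measure lborel (\<Union>i\<in>G. box (a i) (a i + l i *\<^sub>R One))"
        by (rule measure_finite_Union[symmetric])
           (use fG disj GI in \<open>auto simp: disjoint_family_on_def emeasure_lborel_box_eq\<close>)
      also have "\<dots> \<le> measure lborel (cball x (t + w) - ball x (t - w))"
      proof (rule measure_mono_fmeasurable)
        show "(\<Union>i\<in>G. box (a i) (a i + l i *\<^sub>R One)) \<subseteq> cball x (t + w) - ball x (t - w)"
        proof (intro UN_least)
          fix i assume iG: "i \<in> G"
          have "cbox (a i) (a i + l i *\<^sub>R One) \<subseteq> cball x (t + w) - ball x (t - w)"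
            using iG lG[OF iG] D1 unfolding G_def M_def w_def D_def[symmetric]
            by (intro cube_in_shell) (auto simp: D_def intro: mult_left_mono)
          then show "box (a i) (a i + l i *\<^sub>R One) \<subseteq> cball x (t + w) - ball x (t - w)"
            using box_subset_cbox by blast
        qed
        show "(\<Union>i\<in>G. box (a i) (a i + l i *\<^sub>R One)) \<in> sets lborel" using fG by auto
        show "cball x (t + w) - ball x (t - w) \<in> fmeasurable lborel"
        proof (rule fmeasurable_Diff)
          have "t + w \<ge> 0" using t \<sigma> D1 by (simp add: w_def)
          then show "cball x (t + w) \<in> fmeasurable lborel"
            using emeasure_cball[of "t + w" x] by (auto simp: fmeasurable_def)
        qed simp
      qed
      finally show ?thesis .
    qed
    have step3: "measure lborel (cball x (t + w) - ball x (t - w)) \<le> 2 * D * w * ?v * (t + D * s) ^ (?d - 1)"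
    proof -
      have "measure lborel (cball x (t + w) - ball x (t - w)) \<le> 2 * D * w * ?v * (t + w) ^ (?d - 1)"
        using shell_measure[of t w x] t \<sigma> D1 by (simp add: w_def D_def)
      also have "\<dots> \<le> 2 * D * w * ?v * (t + D * s) ^ (?d - 1)"
        using t \<sigma> D1 by (intro mult_left_mono power_mono) (auto simp: w_def)
      finally show ?thesis .
    qed
    have "(\<Sum>i\<in>G. l i powr \<beta>) \<le> (\<Sum>i\<in>G. 2 ^ ?d * \<sigma> powr (\<beta> - D) * l i ^ ?d)"
      by (rule sum_mono) (rule step1)
    also have "\<dots> = 2 ^ ?d * \<sigma> powr (\<beta> - D) * (\<Sum>i\<in>G. l i ^ ?d)" by (simp add: sum_distrib_left)
    also have "\<dots> \<le> 2 ^ ?d * \<sigma> powr (\<beta> - D) * (2 * D * w * ?v * (t + D * s) ^ (?d - 1))"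
      using step2 step3 by (intro mult_left_mono) auto
    also have "\<dots> = 2 ^ ?d * (2 * D * D * ?v) * (t + D * s) ^ (?d - 1) * (\<sigma> powr (\<beta> - D) * \<sigma>)"
      by (simp add: w_def algebra_simps)
    also have "\<sigma> powr (\<beta> - D) * \<sigma> = \<sigma> powr \<gamma>"
      using \<sigma> by (simp add: \<gamma>_def powr_add)
    also have "\<sigma> powr \<gamma> = s powr \<gamma> * q ^ m"
    proof -
      have "(2::real) ^ m = 2 powr real m" by (simp add: powr_realpow)
      then have "(2 ^ m) powr \<gamma> = (2 powr \<gamma>) ^ m"
        by (simp add: powr_powr powr_realpow[symmetric] mult.commute)
      then show ?thesis using s unfolding \<sigma>_def q_def by (simp add: powr_divide power_one_over)
    qed
    finally show ?thesis unfolding G_def K1_def by (simp add: algebra_simps)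
  qed
  define N where "N = Suc (Max (g ` M))"
  have gN: "g ` M \<subseteq> {..<N}" unfolding N_def using fM by (auto simp: le_imp_less_Suc)
  have "(\<Sum>i\<in>M. l i powr \<beta>) = (\<Sum>m<N. \<Sum>i\<in>{i. i \<in> M \<and> g i = m}. l i powr \<beta>)"
    by (rule sum.group[symmetric, OF fM _ gN]) simp
  also have "\<dots> \<le> (\<Sum>m<N. K1 * q ^ m)" by (rule sum_mono) (rule per_m)
  also have "\<dots> = K1 * ((1 - q ^ N) / (1 - q))" using q by (simp add: sum_distrib_left[symmetric] sum_gp_strict)
  also have "\<dots> \<le> K1 * (1 / (1 - q))"
    using q K1 by (intro mult_left_mono divide_right_mono) auto
  finally show ?thesis unfolding M_def K1_def q_def \<gamma>_def D_def by simp
qed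



definition csum :: "real \<Rightarrow> (real \<Rightarrow> complex) \<Rightarrow> nat \<Rightarrow> (nat \<Rightarrow> real) \<Rightarrow> real" where
  "csum r f J \<tau> = (\<Sum>j=1..J. norm (f (\<tau> j) - f (\<tau> (j - 1))) powr r)"

definition chains :: "real set \<Rightarrow> (nat \<times> (nat \<Rightarrow> real)) set" where
  "chains T = {(J::nat, t::nat \<Rightarrow> real). (\<forall>j<J. t j < t (Suc j)) \<and> (\<forall>j\<le>J. t j \<in> T)}"

lemma hatV_alt: "hatV r f T = (SUP (J, \<tau>) \<in> chains T. ennreal (csum r f J \<tau> powr (1 / r)))"
  unfolding hatV_def chains_def csum_def by simp

lemma chain_mem: "(J, \<tau>) \<in> chains T \<Longrightarrow> j \<le> J \<Longrightarrow> \<tau> j \<in> T"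
  unfolding chains_def by auto

lemma epowr_le:
  assumes "v \<le> ennreal z" "z \<ge> 0" "r > 0"
  shows "epowr v r \<le> ennreal (z powr r)"
proof -
  have "v \<noteq> \<infinity>" using assms(1) by (auto simp: top_unique)
  then have "enn2real v \<le> z" using assms(1,2) by (cases v) auto
  then show ?thesis unfolding epowr_def using \<open>v \<noteq> \<infinity>\<close> assms(3)
    by (auto intro!: ennreal_leI powr_mono2 simp: enn2real_nonneg)
qed

lemma Vr_le:
  assumes "\<And>t. t \<in> T \<Longrightarrow> norm (f t) \<le> X"
    and "\<And>J \<tau>. (J, \<tau>) \<in> chains T \<Longrightarrow> csum r f J \<tau> powr (1 / r) \<le> Y"
    and "X \<ge> 0" "Y \<ge> 0"
  shows "Vr r f T \<le> ennreal (X + Y)"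
proof -
  have "(SUP t\<in>T. ennreal (norm (f t))) \<le> ennreal X"
    by (rule SUP_least) (use assms(1) in \<open>auto intro: ennreal_leI\<close>)
  moreover have "hatV r f T \<le> ennreal Y"
    unfolding hatV_alt by (rule SUP_least) (use assms(2) in \<open>auto intro: ennreal_leI\<close>)
  ultimately show ?thesis unfolding Vr_def using assms(3,4)
    by (metis add_mono ennreal_plus)
qed

lemma Vr_finite_facts:
  assumes "Vr r f T \<noteq> \<infinity>" "r > 0"
  obtains S H where "S \<ge> 0" "H \<ge> 0" "Vr r f T = ennreal (S + H)"
    "\<And>t. t \<in> T \<Longrightarrow> norm (f t) \<le> S"
    "\<And>J \<tau>. (J, \<tau>) \<in> chains T \<Longrightarrow> csum r f J \<tau> \<le> H powr r"
proof -
  let ?A = "(SUP t\<in>T. ennreal (norm (f t)))" and ?B = "hatV r f T"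
  have A: "?A \<noteq> \<infinity>" and B: "?B \<noteq> \<infinity>" using assms(1) unfolding Vr_def by auto
  define S where "S = enn2real ?A"
  define H where "H = enn2real ?B"
  have AS: "?A = ennreal S" unfolding S_def ennreal_enn2real_if using A[unfolded infinity_ennreal_def] by (rule if_not_P[symmetric])
  have BH: "?B = ennreal H" unfolding H_def ennreal_enn2real_if using B[unfolded infinity_ennreal_def] by (rule if_not_P[symmetric])
  have S0: "S \<ge> 0" "H \<ge> 0" by (auto simp: S_def H_def enn2real_nonneg)
  show ?thesis
  proof
    show "S \<ge> 0" "H \<ge> 0" by (fact S0)+
    show "Vr r f T = ennreal (S + H)" unfolding Vr_def AS BH using S0 by (simp add: ennreal_plus)
    fix t assume "t \<in> T"
    then have "ennreal (norm (f t)) \<le> ?A" by (rule SUP_upper)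
    then show "norm (f t) \<le> S" unfolding AS using S0 by (simp add: ennreal_le_iff)
  next
    fix J \<tau> assume c: "(J, \<tau>) \<in> chains T"
    have "ennreal (csum r f J \<tau> powr (1 / r)) \<le> ?B"
      unfolding hatV_alt using c by (force intro: SUP_upper2)
    then have le: "csum r f J \<tau> powr (1 / r) \<le> H" unfolding BH using S0 by (simp add: ennreal_le_iff)
    have cs0: "csum r f J \<tau> \<ge> 0" unfolding csum_def by (auto intro: sum_nonneg)
    have "csum r f J \<tau> = (csum r f J \<tau> powr (1 / r)) powr r"
      using cs0 assms(2) by (simp add: powr_powr)
    also have "\<dots> \<le> H powr r" using le assms(2) by (intro powr_mono2) auto
    finally show "csum r f J \<tau> \<le> H powr r" .
  qed
qed



definition Sv :: "real set \<Rightarrow> (real \<Rightarrow> complex) \<Rightarrow> real" where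
  "Sv T f = enn2real (SUP t\<in>T. ennreal (norm (f t)))"
definition Hv :: "real \<Rightarrow> (real \<Rightarrow> complex) \<Rightarrow> real set \<Rightarrow> real" where
  "Hv r f T = enn2real (hatV r f T)"

lemma Vr_facts:
  assumes "Vr r f T \<noteq> \<infinity>" "r > 0"
  shows "Sv T f \<ge> 0" "Hv r f T \<ge> 0" "Vr r f T = ennreal (Sv T f + Hv r f T)"
    "\<And>t. t \<in> T \<Longrightarrow> norm (f t) \<le> Sv T f"
    "\<And>J \<tau>. (J, \<tau>) \<in> chains T \<Longrightarrow> csum r f J \<tau> \<le> Hv r f T powr r"
proof -
  let ?A = "(SUP t\<in>T. ennreal (norm (f t)))" and ?B = "hatV r f T"
  have A: "?A \<noteq> \<infinity>" and B: "?B \<noteq> \<infinity>" using assms(1) unfolding Vr_def by auto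
  have AS: "?A = ennreal (Sv T f)" unfolding Sv_def ennreal_enn2real_if using A[unfolded infinity_ennreal_def] by (rule if_not_P[symmetric])
  have BH: "?B = ennreal (Hv r f T)" unfolding Hv_def ennreal_enn2real_if using B[unfolded infinity_ennreal_def] by (rule if_not_P[symmetric])
  show S0: "Sv T f \<ge> 0" "Hv r f T \<ge> 0" by (auto simp: Sv_def Hv_def enn2real_nonneg)
  show "Vr r f T = ennreal (Sv T f + Hv r f T)" unfolding Vr_def AS BH using S0 by (simp add: ennreal_plus)
  show "norm (f t) \<le> Sv T f" if "t \<in> T" for t
  proof -
    from that have "ennreal (norm (f t)) \<le> ?A" by (rule SUP_upper)
    then show ?thesis unfolding AS using S0 by (simp add: ennreal_le_iff)
  qed
  show "csum r f J \<tau> \<le> Hv r f T powr r" if c: "(J, \<tau>) \<in> chains T" for J \<tau>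
  proof -
    have "ennreal (csum r f J \<tau> powr (1 / r)) \<le> ?B"
      unfolding hatV_alt using c by (force intro: SUP_upper2)
    then have le: "csum r f J \<tau> powr (1 / r) \<le> Hv r f T" unfolding BH using S0 by (simp add: ennreal_le_iff)
    have cs0: "csum r f J \<tau> \<ge> 0" unfolding csum_def by (auto intro: sum_nonneg)
    have "csum r f J \<tau> = (csum r f J \<tau> powr (1 / r)) powr r"
      using cs0 assms(2) by (simp add: powr_powr)
    also have "\<dots> \<le> Hv r f T powr r" using le assms(2) by (intro powr_mono2) auto
    finally show ?thesis .
  qed
qed

lemma root_le:
  fixes x z r :: real
  assumes "0 \<le> x" "x powr r \<le> z" "r > 0"
  shows "x \<le> z powr (1 / r)"
proof -
  have "x = (x powr r) powr (1 / r)" using assms by (simp add: powr_powr)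
  also have "\<dots> \<le> z powr (1 / r)" using assms by (intro powr_mono2) auto
  finally show ?thesis .
qed

lemma holder_apply:
  fixes c u :: "nat \<Rightarrow> real"
  assumes I: "finite I" and r: "r > 1" and u: "\<And>i. i \<in> I \<Longrightarrow> u i > 0"
    and c: "\<And>i. i \<in> I \<Longrightarrow> c i \<ge> 0" and Z: "Z \<subseteq> I" and cZ: "\<And>i. i \<in> I \<Longrightarrow> i \<notin> Z \<Longrightarrow> c i = 0"
    and W: "(\<Sum>i\<in>Z. u i powr (r/(r-1))) \<le> B"
  shows "(\<Sum>i\<in>I. c i) powr r \<le> B powr (r - 1) * (\<Sum>i\<in>I. u i powr (-r) * c i powr r)"
proof -
  have fZ: "finite Z" using Z I finite_subset by blast
  have "(\<Sum>i\<in>I. c i) = (\<Sum>i\<in>Z. c i)"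
    by (rule sum.mono_neutral_right[OF I Z]) (use cZ in auto)
  then have "(\<Sum>i\<in>I. c i) powr r = (\<Sum>i\<in>Z. c i) powr r" by simp
  also have "\<dots> \<le> (\<Sum>i\<in>Z. u i powr (r/(r-1))) powr (r-1) * (\<Sum>i\<in>Z. u i powr (-r) * c i powr r)"
    by (rule holder_sum[OF fZ _ _ r]) (use u c Z in auto)
  also have "\<dots> \<le> B powr (r - 1) * (\<Sum>i\<in>I. u i powr (-r) * c i powr r)"
  proof (rule mult_mono)
    show "(\<Sum>i\<in>Z. u i powr (r/(r-1))) powr (r-1) \<le> B powr (r - 1)"
      using W r by (intro powr_mono2) (auto intro: sum_nonneg)
    show "(\<Sum>i\<in>Z. u i powr (-r) * c i powr r) \<le> (\<Sum>i\<in>I. u i powr (-r) * c i powr r)"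
      by (rule sum_mono2[OF I Z]) auto
  qed (auto intro: sum_nonneg)
  finally show ?thesis .
qed



lemma abstract_main:
  fixes F :: "real \<Rightarrow> complex" and a :: "nat \<Rightarrow> real \<Rightarrow> complex" and u :: "nat \<Rightarrow> real"
    and Z :: "real \<Rightarrow> nat set"
  assumes I: "finite I" and r: "r > 1" and B: "B > 0" and u: "\<And>i. i \<in> I \<Longrightarrow> u i > 0"
    and F: "\<And>t. t \<in> T \<Longrightarrow> F t = (\<Sum>i\<in>I. a i t)"
    and Z: "\<And>t i. t \<in> T \<Longrightarrow> i \<in> I \<Longrightarrow> a i t \<noteq> 0 \<Longrightarrow> i \<in> Z t"
    and ZI: "\<And>t. t \<in> T \<Longrightarrow> Z t \<subseteq> I"
    and W: "\<And>t. t \<in> T \<Longrightarrow> (\<Sum>i\<in>Z t. u i powr (r/(r-1))) \<le> B"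
  shows "epowr (Vr r F T) r \<le> ennreal (2 powr r * (2*B) powr (r-1)) *
           (\<Sum>i\<in>I. ennreal (u i powr (-r)) * epowr (Vr r (a i) T) r)"
proof (cases "\<exists>i\<in>I. Vr r (a i) T = \<infinity>")
  case True
  then obtain i where i: "i \<in> I" "Vr r (a i) T = \<infinity>" by blast
  have "ennreal (u i powr (-r)) * epowr (Vr r (a i) T) r = \<infinity>"
    using i u[OF i(1)] by (simp add: epowr_def ennreal_mult_top)
  moreover have "ennreal (u i powr (-r)) * epowr (Vr r (a i) T) r \<le> (\<Sum>i\<in>I. ennreal (u i powr (-r)) * epowr (Vr r (a i) T) r)"
    by (rule member_le_sum[OF i(1)]) (auto simp: I)
  ultimately have "(\<Sum>i\<in>I. ennreal (u i powr (-r)) * epowr (Vr r (a i) T) r) = \<infinity>"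
    by (simp add: top_unique)
  moreover have "2 powr r * (2*B) powr (r-1) > 0" using B by simp
  ultimately show ?thesis using B by (simp add: ennreal_mult_top)
next
  case False
  have r0: "r > 0" using r by simp
  let ?S = "\<lambda>i. Sv T (a i)" and ?H = "\<lambda>i. Hv r (a i) T"
  have fin: "\<And>i. i \<in> I \<Longrightarrow> Vr r (a i) T \<noteq> \<infinity>" using False by blast
  note facts = Vr_facts[OF fin r0]
  define X where "X = (B powr (r-1) * (\<Sum>i\<in>I. u i powr (-r) * ?S i powr r)) powr (1/r)"
  define Y where "Y = ((2*B) powr (r-1) * (\<Sum>i\<in>I. u i powr (-r) * ?H i powr r)) powr (1/r)"
  have X0: "X \<ge> 0" and Y0: "Y \<ge> 0" by (simp_all add: X_def Y_def)
  have Xsup: "norm (F t) \<le> X" if t: "t \<in> T" for t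
  proof -
    have "norm (F t) \<le> (\<Sum>i\<in>I. norm (a i t))" unfolding F[OF t] by (rule norm_sum)
    then have "norm (F t) powr r \<le> (\<Sum>i\<in>I. norm (a i t)) powr r" using r0 by (intro powr_mono2) auto
    also have "\<dots> \<le> B powr (r - 1) * (\<Sum>i\<in>I. u i powr (-r) * norm (a i t) powr r)"
      by (rule holder_apply[OF I r u _ ZI[OF t] _ W[OF t]]) (use Z[OF t] in auto)
    also have "\<dots> \<le> B powr (r - 1) * (\<Sum>i\<in>I. u i powr (-r) * ?S i powr r)"
      using facts(4)[OF _ t] r0
      by (intro mult_left_mono sum_mono mult_left_mono powr_mono2) auto
    finally have "norm (F t) powr r \<le> B powr (r - 1) * (\<Sum>i\<in>I. u i powr (-r) * ?S i powr r)" .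
    then show ?thesis unfolding X_def by (rule root_le[OF _ _ r0, rotated]) simp
  qed
  have Ych: "csum r F J \<tau> powr (1 / r) \<le> Y" if c: "(J, \<tau>) \<in> chains T" for J \<tau>
  proof -
    define cc where "cc i j = norm (a i (\<tau> j) - a i (\<tau> (j - 1)))" for i j
    have stepj: "norm (F (\<tau> j) - F (\<tau> (j - 1))) powr r \<le> (2*B) powr (r - 1) * (\<Sum>i\<in>I. u i powr (-r) * cc i j powr r)"
      if j: "j \<in> {1..J}" for j
    proof -
      have t1: "\<tau> j \<in> T" and t2: "\<tau> (j - 1) \<in> T" using chain_mem[OF c] j by auto
      have "norm (F (\<tau> j) - F (\<tau> (j - 1))) = norm (\<Sum>i\<in>I. a i (\<tau> j) - a i (\<tau> (j - 1)))"
        by (simp only: F[OF t1] F[OF t2] sum_subtractf)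
      also have "\<dots> \<le> (\<Sum>i\<in>I. cc i j)" unfolding cc_def by (rule norm_sum)
      finally have "norm (F (\<tau> j) - F (\<tau> (j - 1))) powr r \<le> (\<Sum>i\<in>I. cc i j) powr r"
        using r0 by (intro powr_mono2) auto
      also have "\<dots> \<le> (2*B) powr (r - 1) * (\<Sum>i\<in>I. u i powr (-r) * cc i j powr r)"
      proof (rule holder_apply[OF I r u])
        show "Z (\<tau> j) \<union> Z (\<tau> (j - 1)) \<subseteq> I" using ZI t1 t2 by auto
        show "cc i j = 0" if "i \<in> I" "i \<notin> Z (\<tau> j) \<union> Z (\<tau> (j - 1))" for i
          using Z[OF t1 that(1)] Z[OF t2 that(1)] that(2) unfolding cc_def by (metis UnCI diff_self norm_zero)
        have fZ1: "finite (Z (\<tau> j))" and fZ2: "finite (Z (\<tau> (j-1)))"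
          using ZI t1 t2 I finite_subset by blast+
        have "(\<Sum>i\<in>Z (\<tau> j) \<union> Z (\<tau> (j - 1)). u i powr (r/(r-1)))
            \<le> (\<Sum>i\<in>Z (\<tau> j) \<union> Z (\<tau> (j - 1)). u i powr (r/(r-1))) + (\<Sum>i\<in>Z (\<tau> j) \<inter> Z (\<tau> (j - 1)). u i powr (r/(r-1)))"
          by (simp add: sum_nonneg)
        also have "\<dots> = (\<Sum>i\<in>Z (\<tau> j). u i powr (r/(r-1))) + (\<Sum>i\<in>Z (\<tau> (j - 1)). u i powr (r/(r-1)))"
          by (rule sum.union_inter[OF fZ1 fZ2])
        also have "\<dots> \<le> 2 * B" using W[OF t1] W[OF t2] by simp
        finally show "(\<Sum>i\<in>Z (\<tau> j) \<union> Z (\<tau> (j - 1)). u i powr (r/(r-1))) \<le> 2 * B" .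
      qed (auto simp: cc_def)
      finally show ?thesis .
    qed
    have "csum r F J \<tau> \<le> (\<Sum>j=1..J. (2*B) powr (r - 1) * (\<Sum>i\<in>I. u i powr (-r) * cc i j powr r))"
      unfolding csum_def by (rule sum_mono) (rule stepj)
    also have "\<dots> = (2*B) powr (r - 1) * (\<Sum>i\<in>I. u i powr (-r) * csum r (a i) J \<tau>)"
      by (simp add: sum_distrib_left csum_def cc_def) (rule sum.swap)
    also have "\<dots> \<le> (2*B) powr (r - 1) * (\<Sum>i\<in>I. u i powr (-r) * ?H i powr r)"
      using facts(5)[OF _ c] by (intro mult_left_mono sum_mono mult_left_mono) auto
    finally have le: "csum r F J \<tau> \<le> (2*B) powr (r - 1) * (\<Sum>i\<in>I. u i powr (-r) * ?H i powr r)" .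
    have cs0: "csum r F J \<tau> \<ge> 0" unfolding csum_def by (auto intro: sum_nonneg)
    show ?thesis unfolding Y_def using le cs0 r0 by (intro powr_mono2) auto
  qed
  have VF: "Vr r F T \<le> ennreal (X + Y)" by (rule Vr_le[OF Xsup Ych X0 Y0])
  have lhs: "epowr (Vr r F T) r \<le> ennreal ((X + Y) powr r)"
    by (rule epowr_le[OF VF _ r0]) (use X0 Y0 in simp)
  have XY: "(X + Y) powr r \<le> 2 powr (r - 1) * (X powr r + Y powr r)"
  proof -
    have "(\<Sum>i\<in>{0::nat,1}. (if i = 0 then X else Y)) powr r
       \<le> (\<Sum>i\<in>{0::nat,1}. (1::real) powr (r/(r-1))) powr (r-1) * (\<Sum>i\<in>{0::nat,1}. 1 powr (-r) * (if i = 0 then X else Y) powr r)"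
      by (rule holder_sum[OF _ _ _ r]) (use X0 Y0 in auto)
    then show ?thesis by simp
  qed
  have Xr: "X powr r = B powr (r-1) * (\<Sum>i\<in>I. u i powr (-r) * ?S i powr r)"
    unfolding X_def using r0 by (simp add: powr_powr sum_nonneg)
  have Yr: "Y powr r = (2*B) powr (r-1) * (\<Sum>i\<in>I. u i powr (-r) * ?H i powr r)"
    unfolding Y_def using r0 by (simp add: powr_powr sum_nonneg)
  have SH: "?S i powr r + ?H i powr r \<le> 2 * (?S i + ?H i) powr r" if "i \<in> I" for i
  proof -
    have "?S i powr r \<le> (?S i + ?H i) powr r" "?H i powr r \<le> (?S i + ?H i) powr r"
      using facts(1,2)[OF that] r0 by (auto intro!: powr_mono2)
    then show ?thesis by simp
  qed
  have "X powr r + Y powr r \<le> (2*B) powr (r-1) * (\<Sum>i\<in>I. u i powr (-r) * ?S i powr r)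
        + (2*B) powr (r-1) * (\<Sum>i\<in>I. u i powr (-r) * ?H i powr r)"
    unfolding Xr Yr using B r by (intro add_mono mult_right_mono powr_mono2 sum_nonneg) auto
  also have "\<dots> = (2*B) powr (r-1) * (\<Sum>i\<in>I. u i powr (-r) * (?S i powr r + ?H i powr r))"
    by (simp add: algebra_simps sum.distrib)
  also have "\<dots> \<le> (2*B) powr (r-1) * (\<Sum>i\<in>I. u i powr (-r) * (2 * (?S i + ?H i) powr r))"
    using SH by (intro mult_left_mono sum_mono) auto
  finally have XYr: "X powr r + Y powr r \<le> (2*B) powr (r-1) * (2 * (\<Sum>i\<in>I. u i powr (-r) * (?S i + ?H i) powr r))"
    by (simp add: sum_distrib_left algebra_simps)
  define Q where "Q = (\<Sum>i\<in>I. u i powr (-r) * (?S i + ?H i) powr r)"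
  have Q0: "Q \<ge> 0" unfolding Q_def by (auto intro: sum_nonneg)
  have "(X + Y) powr r \<le> 2 powr (r - 1) * ((2*B) powr (r-1) * (2 * Q))"
    using XY XYr unfolding Q_def by (smt (verit) mult_left_mono powr_ge_zero)
  also have "\<dots> = 2 powr r * (2*B) powr (r-1) * Q"
    by (simp add: powr_diff algebra_simps)
  finally have real_ineq: "(X + Y) powr r \<le> 2 powr r * (2*B) powr (r-1) * Q" .
  have rhs: "(\<Sum>i\<in>I. ennreal (u i powr (-r)) * epowr (Vr r (a i) T) r) = ennreal Q"
  proof -
    have "(\<Sum>i\<in>I. ennreal (u i powr (-r)) * epowr (Vr r (a i) T) r)
        = (\<Sum>i\<in>I. ennreal (u i powr (-r) * (?S i + ?H i) powr r))"
    proof (rule sum.cong)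
      fix i assume i: "i \<in> I"
      have "epowr (Vr r (a i) T) r = ennreal ((?S i + ?H i) powr r)"
        unfolding facts(3)[OF i] epowr_def using facts(1,2)[OF i] by (simp del: ennreal_plus)
      then show "ennreal (u i powr (-r)) * epowr (Vr r (a i) T) r = ennreal (u i powr (-r) * (?S i + ?H i) powr r)"
        by (simp add: ennreal_mult)
    qed simp
    also have "\<dots> = ennreal Q" unfolding Q_def by (rule sum_ennreal) simp
    finally show ?thesis .
  qed
  show ?thesis unfolding rhs using lhs real_ineq B Q0
    by (smt (verit) ennreal_leI ennreal_mult mult_nonneg_nonneg powr_ge_zero order_trans)
qed



lemma avg_sum:
  fixes b :: "nat \<Rightarrow> 'a::euclidean_space \<Rightarrow> complex"
  assumes "finite I" "\<And>i. i \<in> I \<Longrightarrow> integrable lebesgue (b i)"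
  shows "avg t (\<lambda>y. \<Sum>i\<in>I. b i y) x = (\<Sum>i\<in>I. avg t (b i) x)"
proof -
  have int: "integrable lebesgue (\<lambda>y. indicator (ball 0 t) y *\<^sub>R b i (x + y))" if "i \<in> I" for i
    by (rule integrable_mult_indicator) (use integrable_translate[OF assms(2)[OF that]] in auto)
  have "(LINT y : ball 0 t | lebesgue. (\<Sum>i\<in>I. b i (x + y)))
      = (\<Sum>i\<in>I. LINT y : ball 0 t | lebesgue. b i (x + y))"
    unfolding set_lebesgue_integral_def scaleR_sum_right
    by (rule Bochner_Integration.integral_sum) (use int in auto)
  then show ?thesis unfolding avg_def by (simp add: scaleR_sum_right)
qed

lemma weight_bound:
  fixes x :: "'a::euclidean_space" and ac :: "nat \<Rightarrow> 'a" and l :: "nat \<Rightarrow> real"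
  assumes I: "finite I" and lpos: "\<And>i. i \<in> I \<Longrightarrow> 0 < l i \<and> l i \<le> C1 * P"
    and disj: "\<And>i j. i \<in> I \<Longrightarrow> j \<in> I \<Longrightarrow> i \<noteq> j \<Longrightarrow>
        box (ac i) (ac i + l i *\<^sub>R One) \<inter> box (ac j) (ac j + l j *\<^sub>R One) = {}"
    and \<beta>: "\<beta> > real DIM('a) - 1" and t: "P \<le> t" "t \<le> 2 * P" and P: "P > 0" and C1: "C1 > 0"
  shows "(\<Sum>i\<in>{i\<in>I. cbox (ac i) (ac i + l i *\<^sub>R One) \<inter> sphere x t \<noteq> {}}. l i powr \<beta>)
     \<le> (2 ^ DIM('a) * (2 * real DIM('a) * real DIM('a) * unit_ball_vol (DIM('a)))
        * (2 + real DIM('a) * C1) ^ (DIM('a) - 1) * C1 powr (\<beta> - real DIM('a) + 1)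
        / (1 - 1 / 2 powr (\<beta> - real DIM('a) + 1))) * P powr \<beta>"
proof -
  let ?d = "DIM('a)"
  define D where "D = real ?d"
  define \<gamma> where "\<gamma> = \<beta> - D + 1"
  have \<gamma>: "\<gamma> > 0" using \<beta> unfolding \<gamma>_def D_def by simp
  have den: "1 - 1 / 2 powr \<gamma> > 0" using \<gamma> by simp
  define K where "K = 2 ^ ?d * (2 * D * D * unit_ball_vol ?d)"
  have K: "K \<ge> 0" unfolding K_def D_def by simp
  have "(\<Sum>i\<in>{i\<in>I. cbox (ac i) (ac i + l i *\<^sub>R One) \<inter> sphere x t \<noteq> {}}. l i powr \<beta>)
     \<le> K * (t + D * (C1 * P)) ^ (?d - 1) * (C1 * P) powr \<gamma> / (1 - 1 / 2 powr \<gamma>)"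
    unfolding K_def D_def \<gamma>_def
    by (rule count_cubes[OF I lpos disj \<beta>]) (use t P C1 in auto)
  also have "\<dots> \<le> K * ((2 + D * C1) ^ (?d - 1) * P ^ (?d - 1)) * (C1 * P) powr \<gamma> / (1 - 1 / 2 powr \<gamma>)"
  proof -
    have "(t + D * (C1 * P)) ^ (?d - 1) \<le> ((2 + D * C1) * P) ^ (?d - 1)"
      using t P C1 by (intro power_mono) (auto simp: D_def algebra_simps)
    then show ?thesis using K den
      by (intro divide_right_mono mult_right_mono mult_left_mono) (auto simp: power_mult_distrib)
  qed
  also have "\<dots> = (K * (2 + D * C1) ^ (?d - 1) * C1 powr \<gamma> / (1 - 1 / 2 powr \<gamma>)) * (P ^ (?d - 1) * P powr \<gamma>)"
    using P C1 by (simp add: powr_mult)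
  also have "P ^ (?d - 1) * P powr \<gamma> = P powr \<beta>"
  proof -
    have "P ^ (?d - 1) = P powr (D - 1)"
      using P by (simp add: D_def powr_realpow[symmetric] of_nat_diff DIM_positive Suc_leI)
    then show ?thesis using P by (simp add: powr_add[symmetric] \<gamma>_def)
  qed
  finally show ?thesis unfolding K_def D_def \<gamma>_def by simp
qed



theorem lemma2p1:
  fixes r \<alpha> C1 :: real
  assumes "1 < r" and "0 < C1" and "\<alpha> > (real DIM('a::euclidean_space) - 1) / (r / (r - 1))"
  shows "\<exists>C>0. \<forall>(k::int) (I::nat set) (Q::nat \<Rightarrow> 'a set) (l::nat \<Rightarrow> real) (b::nat \<Rightarrow> 'a \<Rightarrow> complex).
    finite I \<and>
    (\<forall>i\<in>I. is_cube (Q i) (l i) \<and> l i \<le> C1 * 2 powr real_of_int k) \<and>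
    (\<forall>i\<in>I. \<forall>j\<in>I. i \<noteq> j \<longrightarrow> Q i \<inter> Q j = {}) \<and>
    (\<forall>i\<in>I. integrable lebesgue (b i) \<and> (\<forall>x. x \<notin> Q i \<longrightarrow> b i x = 0) \<and>
            (LINT x | lebesgue. b i x) = 0)
    \<longrightarrow> (\<forall>x::'a. epowr (Rk r k (\<lambda>y. \<Sum>i\<in>I. b i y) x) r
          \<le> ennreal (C * (2 powr real_of_int k) powr (\<alpha> * r)) *
             (\<Sum>i\<in>I. ennreal (l i powr (- \<alpha> * r)) * epowr (Rk r k (b i) x) r))"
proof -
  let ?d = "DIM('a)"
  define \<beta> where "\<beta> = \<alpha> * (r / (r - 1))"
  have rq: "r / (r - 1) > 0" using assms(1) by simp
  have \<beta>: "\<beta> > real ?d - 1" unfolding \<beta>_def using assms(3) pos_divide_less_eq[OF rq] by blast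
  have \<beta>r: "\<beta> * (r - 1) = \<alpha> * r" unfolding \<beta>_def using assms(1) by simp
  define K0 where "K0 = (2 ^ ?d * (2 * real ?d * real ?d * unit_ball_vol (?d))
        * (2 + real ?d * C1) ^ (?d - 1) * C1 powr (\<beta> - real ?d + 1)
        / (1 - 1 / 2 powr (\<beta> - real ?d + 1)))"
  have K0: "K0 > 0"
  proof -
    have "\<beta> - real ?d + 1 > 0" using \<beta> by simp
    then have "1 - 1 / 2 powr (\<beta> - real ?d + 1) > 0" by simp
    moreover have "real ?d > 0" by simp
    moreover have "(2 + real ?d * C1) ^ (?d - 1) > 0" using assms(2) by (intro zero_less_power add_pos_nonneg) auto
    ultimately show ?thesis unfolding K0_def using assms(2)
      by (intro divide_pos_pos mult_pos_pos) auto
  qed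
  define C where "C = 2 powr r * (2 * K0) powr (r - 1)"
  have C: "C > 0" unfolding C_def using K0 by simp
  show ?thesis
  proof (intro exI[of _ C] conjI C allI impI)
    fix k :: int and I :: "nat set" and Q :: "nat \<Rightarrow> 'a set" and l :: "nat \<Rightarrow> real"
      and b :: "nat \<Rightarrow> 'a \<Rightarrow> complex" and x :: 'a
    assume H: "finite I \<and>
    (\<forall>i\<in>I. is_cube (Q i) (l i) \<and> l i \<le> C1 * 2 powr real_of_int k) \<and>
    (\<forall>i\<in>I. \<forall>j\<in>I. i \<noteq> j \<longrightarrow> Q i \<inter> Q j = {}) \<and>
    (\<forall>i\<in>I. integrable lebesgue (b i) \<and> (\<forall>x. x \<notin> Q i \<longrightarrow> b i x = 0) \<and>
            (LINT x | lebesgue. b i x) = 0)"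
    have I: "finite I" using H by blast
    define P where "P = 2 powr real_of_int k"
    have P: "P > 0" unfolding P_def by simp
    define T where "T = {P .. 2 powr real_of_int (k + 1)}"
    have T2: "2 powr real_of_int (k + 1) = 2 * P" unfolding P_def by (simp add: powr_add)
    have cube: "is_cube (Q i) (l i)" and lle: "l i \<le> C1 * P" if "i \<in> I" for i
      using H that unfolding P_def by auto
    define ac where "ac i = (SOME a. box a (a + l i *\<^sub>R One) \<subseteq> Q i \<and> Q i \<subseteq> cbox a (a + l i *\<^sub>R One))" for i
    have ac: "box (ac i) (ac i + l i *\<^sub>R One) \<subseteq> Q i \<and> Q i \<subseteq> cbox (ac i) (ac i + l i *\<^sub>R One)"
      and lpos: "l i > 0" if "i \<in> I" for i
    proof -
      from cube[OF that] show "l i > 0" unfolding is_cube_def by blast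
      from cube[OF that] have "\<exists>a. box a (a + l i *\<^sub>R One) \<subseteq> Q i \<and> Q i \<subseteq> cbox a (a + l i *\<^sub>R One)"
        unfolding is_cube_def by blast
      then show "box (ac i) (ac i + l i *\<^sub>R One) \<subseteq> Q i \<and> Q i \<subseteq> cbox (ac i) (ac i + l i *\<^sub>R One)"
        unfolding ac_def by (rule someI_ex)
    qed
    have bint: "integrable lebesgue (b i)" and bsupp: "\<And>y. y \<notin> Q i \<Longrightarrow> b i y = 0"
      and bmean: "(LINT y | lebesgue. b i y) = 0" if "i \<in> I" for i
      using H that by auto
    define Z where "Z t = {i\<in>I. cbox (ac i) (ac i + l i *\<^sub>R One) \<inter> sphere x t \<noteq> {}}" for t
    have main: "epowr (Vr r (\<lambda>t. avg t (\<lambda>y. \<Sum>i\<in>I. b i y) x) T) r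
      \<le> ennreal (2 powr r * (2 * (K0 * P powr \<beta>)) powr (r-1)) *
           (\<Sum>i\<in>I. ennreal ((l i powr \<alpha>) powr (-r)) * epowr (Vr r (\<lambda>t. avg t (b i) x) T) r)"
    proof (rule abstract_main[OF I assms(1)])
      show "K0 * P powr \<beta> > 0" using K0 P by simp
      show "\<And>i. i \<in> I \<Longrightarrow> l i powr \<alpha> > 0" using lpos by (metis powr_gt_zero order_less_irrefl)
      show "\<And>t. t \<in> T \<Longrightarrow> avg t (\<lambda>y. \<Sum>i\<in>I. b i y) x = (\<Sum>i\<in>I. avg t (b i) x)"
        by (rule avg_sum[OF I bint])
      show "\<And>t. t \<in> T \<Longrightarrow> Z t \<subseteq> I" unfolding Z_def by auto
      show "i \<in> Z t" if t: "t \<in> T" and i: "i \<in> I" and nz: "avg t (b i) x \<noteq> 0" for t i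
      proof (rule ccontr)
        assume "i \<notin> Z t"
        then have e: "cbox (ac i) (ac i + l i *\<^sub>R One) \<inter> sphere x t = {}" unfolding Z_def using i by blast
        have "t > 0" using t P unfolding T_def by auto
        have "avg t (b i) x = 0"
          by (rule avg_zero[OF bint[OF i] bsupp[OF i] bmean[OF i] conjunct2[OF ac[OF i]] _ e \<open>t > 0\<close>])
             (simp_all add: convex_connected)
        then show False using nz by simp
      qed
      show "(\<Sum>i\<in>Z t. (l i powr \<alpha>) powr (r/(r-1))) \<le> K0 * P powr \<beta>" if t: "t \<in> T" for t
      proof -
        have "(\<Sum>i\<in>Z t. (l i powr \<alpha>) powr (r/(r-1))) = (\<Sum>i\<in>Z t. l i powr \<beta>)"
          by (rule sum.cong) (auto simp: powr_powr \<beta>_def)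
        also have "\<dots> \<le> K0 * P powr \<beta>" unfolding Z_def K0_def
        proof (rule weight_bound[OF I _ _ \<beta> _ _ P assms(2)])
          show "\<And>i. i \<in> I \<Longrightarrow> 0 < l i \<and> l i \<le> C1 * P" using lpos lle by auto
          show "box (ac i) (ac i + l i *\<^sub>R One) \<inter> box (ac j) (ac j + l j *\<^sub>R One) = {}"
            if "i \<in> I" "j \<in> I" "i \<noteq> j" for i j
            using ac[OF that(1)] ac[OF that(2)] H that by blast
          show "P \<le> t" "t \<le> 2 * P" using t T2 unfolding T_def by auto
        qed
        finally show ?thesis .
      qed
    qed
    have e1: "2 powr r * (2 * (K0 * P powr \<beta>)) powr (r-1) = C * P powr (\<alpha> * r)"
      unfolding C_def using K0 P by (simp add: powr_mult powr_powr \<beta>r)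
    have e2: "(l i powr \<alpha>) powr (-r) = l i powr (- \<alpha> * r)" for i
      by (simp add: powr_powr)
    show "epowr (Rk r k (\<lambda>y. \<Sum>i\<in>I. b i y) x) r
          \<le> ennreal (C * (2 powr real_of_int k) powr (\<alpha> * r)) *
             (\<Sum>i\<in>I. ennreal (l i powr (- \<alpha> * r)) * epowr (Rk r k (b i) x) r)"
      using main[unfolded e1 e2] unfolding Rk_def T_def P_def by simp
  qed
qed


end
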